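(* In the Setting below, let $I$ be an $\mathfrak n$-primary ideal of $S$. Then $$g(I)=c(I)-1=\max\{\mathrm{Val}(a)\mid a\in (I:_K\mathfrak n)\setminus I\}.$$
   Context: Setting: $(S,\mathfrak n)$ is a one-dimensional Noetherian local domain, not regular, with infinite residue field $k$ and quotient field $K$; its integral closure $\overline S$ in $K$ is a DVR and a finite $S$-module, with uniformizer $t$, and $S/\mathfrak n\to\overline S/t\overline S$ is an isomorphism. $\mathrm{Val}$ denotes the valuation of $\overline S$ on $K$ with $\mathrm{Val}(t)=1$. For fractional ideals, $I:_KJ=\{a\in K\mid aJ\subseteq I\}$. For an ideal $I$, $\mathfrak C_I=I:_K\overline S$ and $c(I)$ is the integer with $\mathfrak C_I=t^{c(I)}\overline S$. The Frobenius number of $I$ is $g(I)=\max\{\mathrm{Val}(a)\mid a\in K\setminus I,\ a\neq0\}$. *)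

theory Defs
  imports Main
begin

text \<open>All rings live inside a fixed field K, represented by the type 'a (K = UNIV).
Subrings and ideals are sets of elements of 'a.\<close>

definition subring :: "'a::field set \<Rightarrow> bool" where
  "subring S \<longleftrightarrow> 0 \<in> S \<and> 1 \<in> S \<and> (\<forall>x\<in>S. \<forall>y\<in>S. x + y \<in> S \<and> x - y \<in> S \<and> x * y \<in> S)"

definition quotient_field_of :: "'a::field set \<Rightarrow> bool" where
  "quotient_field_of S \<longleftrightarrow> (\<forall>x. \<exists>a\<in>S. \<exists>b\<in>S. b \<noteq> 0 \<and> x = a / b)"

definition ideal_of :: "'a::field set \<Rightarrow> 'a set \<Rightarrow> bool" where
  "ideal_of S I \<longleftrightarrow> I \<subseteq> S \<and> 0 \<in> I \<and> (\<forall>x\<in>I. \<forall>y\<in>I. x + y \<in> I) \<and> (\<forall>s\<in>S. \<forall>x\<in>I. s * x \<in> I)"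

definition S_span :: "'a::field set \<Rightarrow> 'a set \<Rightarrow> 'a set" where
  "S_span S F = {(\<Sum>f\<in>F. r f * f) | r. \<forall>f\<in>F. r f \<in> S}"

definition noetherian :: "'a::field set \<Rightarrow> bool" where
  "noetherian S \<longleftrightarrow> (\<forall>J. ideal_of S J \<longrightarrow> (\<exists>F. finite F \<and> F \<subseteq> S \<and> J = S_span S F))"

definition nonunits :: "'a::field set \<Rightarrow> 'a set" where
  "nonunits S = {x \<in> S. \<not> (x \<noteq> 0 \<and> inverse x \<in> S)}"

text \<open>Local: the non-units form an ideal, which is then the unique maximal ideal n.\<close>
definition local_ring :: "'a::field set \<Rightarrow> bool" where
  "local_ring S \<longleftrightarrow> ideal_of S (nonunits S)"

definition prime_ideal_of :: "'a::field set \<Rightarrow> 'a set \<Rightarrow> bool" where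
  "prime_ideal_of S P \<longleftrightarrow> ideal_of S P \<and> P \<noteq> S \<and> (\<forall>x\<in>S. \<forall>y\<in>S. x * y \<in> P \<longrightarrow> x \<in> P \<or> y \<in> P)"

definition one_dimensional :: "'a::field set \<Rightarrow> bool" where
  "one_dimensional S \<longleftrightarrow> nonunits S \<noteq> {0} \<and>
     (\<forall>P. prime_ideal_of S P \<longrightarrow> P = {0} \<or> P = nonunits S)"

text \<open>A one-dimensional Noetherian local ring is regular iff its maximal ideal is principal.\<close>
definition regular_1dim :: "'a::field set \<Rightarrow> bool" where
  "regular_1dim S \<longleftrightarrow> (\<exists>x\<in>S. nonunits S = {s * x | s. s \<in> S})"

definition residue_field :: "'a::field set \<Rightarrow> 'a set set" where
  "residue_field S = {{y \<in> S. x - y \<in> nonunits S} | x. x \<in> S}"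

definition integral_over :: "'a::field set \<Rightarrow> 'a \<Rightarrow> bool" where
  "integral_over S x \<longleftrightarrow> (\<exists>n::nat. \<exists>c. (\<forall>i<n. c i \<in> S) \<and> x ^ n + (\<Sum>i<n. c i * x ^ i) = 0)"

definition integral_closure :: "'a::field set \<Rightarrow> 'a set" where
  "integral_closure S = {x. integral_over S x}"

text \<open>A discrete valuation v on K (values on nonzero elements), normalized by Val t = 1.\<close>
definition discrete_valuation :: "('a::field \<Rightarrow> int) \<Rightarrow> bool" where
  "discrete_valuation v \<longleftrightarrow>
     (\<forall>x y. x \<noteq> 0 \<longrightarrow> y \<noteq> 0 \<longrightarrow> v (x * y) = v x + v y) \<and>
     (\<forall>x y. x \<noteq> 0 \<longrightarrow> y \<noteq> 0 \<longrightarrow> x + y \<noteq> 0 \<longrightarrow> v (x + y) \<ge> min (v x) (v y)) \<and>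
     (\<exists>t. t \<noteq> 0 \<and> v t = 1)"

text \<open>The valuation ring of v (here: the integral closure S-bar).\<close>
definition val_ring :: "('a::field \<Rightarrow> int) \<Rightarrow> 'a set" where
  "val_ring v = {x. x = 0 \<or> 0 \<le> v x}"

definition colonK :: "'a::field set \<Rightarrow> 'a set \<Rightarrow> 'a set" where
  "colonK I J = {a. \<forall>x\<in>J. a * x \<in> I}"

definition cond_exp :: "('a::field \<Rightarrow> int) \<Rightarrow> 'a set \<Rightarrow> int" where
  "cond_exp v I = (THE c. colonK I (val_ring v) = {x. x = 0 \<or> c \<le> v x})"

definition frobenius :: "('a::field \<Rightarrow> int) \<Rightarrow> 'a set \<Rightarrow> int" where
  "frobenius v I = (GREATEST m. m \<in> {v a | a. a \<notin> I \<and> a \<noteq> 0})"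

definition is_max :: "int \<Rightarrow> int set \<Rightarrow> bool" where
  "is_max m A \<longleftrightarrow> m \<in> A \<and> (\<forall>x\<in>A. x \<le> m)"

definition primary_to_max :: "'a::field set \<Rightarrow> 'a set \<Rightarrow> bool" where
  "primary_to_max S I \<longleftrightarrow> ideal_of S I \<and> I \<noteq> S \<and> (\<forall>x\<in>nonunits S. \<exists>k::nat. x ^ k \<in> I)"

end

theory Submission
  imports Defs
begin

lemma dv_mult: "discrete_valuation v \<Longrightarrow> x \<noteq> 0 \<Longrightarrow> y \<noteq> 0 \<Longrightarrow> v (x * y) = v x + v y"
  unfolding discrete_valuation_def by blast

lemma dv_one: "discrete_valuation v \<Longrightarrow> v 1 = 0"
  using dv_mult[of v 1 1] by simp

lemma dv_inv: "discrete_valuation v \<Longrightarrow> x \<noteq> 0 \<Longrightarrow> v (inverse x) = - v x"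
  using dv_mult[of v x "inverse x"] dv_one[of v] by simp

lemma dv_pow: "discrete_valuation v \<Longrightarrow> x \<noteq> 0 \<Longrightarrow> v (x ^ n) = int n * v x"
  by (induction n) (auto simp: dv_one dv_mult algebra_simps)

lemma dv_exists: assumes "discrete_valuation v" shows "\<exists>x. x \<noteq> 0 \<and> v x = m"
proof -
  obtain t where t: "t \<noteq> 0" "v t = 1" using assms unfolding discrete_valuation_def by blast
  show ?thesis
  proof (cases "m \<ge> 0")
    case True
    then show ?thesis using t dv_pow[OF assms, of t "nat m"] by (intro exI[of _ "t ^ nat m"]) auto
  next
    case False
    then show ?thesis using t dv_pow[OF assms, of t "nat (-m)"] dv_inv[OF assms, of "t ^ nat (-m)"]
      by (intro exI[of _ "inverse (t ^ nat (-m))"]) auto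
  qed
qed

lemma subring_sum: assumes "subring S" "finite F" shows "(\<forall>f\<in>F. g f \<in> S) \<Longrightarrow> sum g F \<in> S"
  using assms(2) by (induction F rule: finite_induct) (use assms(1) in \<open>auto simp: subring_def\<close>)

lemma subring_pow: "subring S \<Longrightarrow> x \<in> S \<Longrightarrow> x ^ n \<in> S"
  by (induction n) (auto simp: subring_def)

lemma subring_neg: "subring S \<Longrightarrow> z \<in> S \<Longrightarrow> - z \<in> S"
  unfolding subring_def by (metis diff_0)

lemma den_exists:
  assumes "subring S" "quotient_field_of S" "finite F"
  shows "\<exists>d\<in>S. d \<noteq> 0 \<and> (\<forall>f\<in>F. d * f \<in> S)"
  using assms(3)
proof (induction F rule: finite_induct)
  case empty
  then show ?case using assms(1) unfolding subring_def by (intro bexI[of _ 1]) auto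
next
  case (insert f F)
  then obtain d where d: "d \<in> S" "d \<noteq> 0" "\<forall>g\<in>F. d * g \<in> S" by blast
  obtain a b where ab: "a \<in> S" "b \<in> S" "b \<noteq> 0" "f = a / b"
    using assms(2) unfolding quotient_field_of_def by blast
  have "d * b \<in> S" using d ab assms(1) unfolding subring_def by blast
  moreover have "(d * b) * f \<in> S" using d ab assms(1) unfolding subring_def by auto
  moreover have "\<forall>g\<in>F. (d * b) * g \<in> S"
  proof
    fix g assume "g \<in> F"
    then have "d * g \<in> S" using d by blast
    then have "b * (d * g) \<in> S" using ab assms(1) unfolding subring_def by blast
    then show "(d * b) * g \<in> S" by (simp add: ac_simps)
  qed
  ultimately show ?case using d ab by (intro bexI[of _ "d * b"]) auto
qed

lemma integral_inverse:
  assumes S: "subring S" and x: "x \<in> S" "x \<noteq> 0"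
    and c: "\<forall>i<n. c i \<in> S" and eq: "(inverse x) ^ n + (\<Sum>i<n. c i * (inverse x) ^ i) = 0"
  shows "inverse x \<in> S"
proof (cases n)
  case 0
  then show ?thesis using eq by simp
next
  case (Suc m)
  define y where "y = inverse x"
  have xy: "x * y = 1" using x y_def by simp
  have e1: "x ^ m * (y ^ Suc m + (\<Sum>i<Suc m. c i * y ^ i)) = 0" using eq Suc y_def by simp
  have e2: "x ^ m * y ^ Suc m = y"
    by (metis xy mult.assoc mult.left_commute mult_1_right power_Suc power_mult_distrib power_one)
  have e3: "x ^ m * (\<Sum>i<Suc m. c i * y ^ i) = (\<Sum>i<Suc m. c i * x ^ (m - i))"
    unfolding sum_distrib_left
  proof (rule sum.cong)
    fix i assume "i \<in> {..<Suc m}"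
    then have "x ^ m = x ^ (m - i) * x ^ i" by (simp add: power_add[symmetric])
    then have "x ^ m * (c i * y ^ i) = c i * x ^ (m - i) * (x * y) ^ i"
      by (simp add: power_mult_distrib ac_simps)
    then show "x ^ m * (c i * y ^ i) = c i * x ^ (m - i)" using xy by simp
  qed simp
  have "y + (\<Sum>i<Suc m. c i * x ^ (m - i)) = 0"
    using e1 unfolding distrib_left e2 e3 .
  then have "y = - (\<Sum>i<Suc m. c i * x ^ (m - i))"
    by (metis add.commute add_eq_0_iff)
  moreover have "(\<Sum>i<Suc m. c i * x ^ (m - i)) \<in> S"
  proof (rule subring_sum[OF S], simp, intro ballI)
    fix i assume i: "i \<in> {..<Suc m}"
    have "x ^ (m - i) \<in> S" using x S by (simp add: subring_pow)
    then show "c i * x ^ (m - i) \<in> S" using c i Suc S unfolding subring_def by auto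
  qed
  ultimately show ?thesis using y_def subring_neg[OF S] by metis
qed

theorem lemma4p3:
  fixes S I :: "'a::field set" and v :: "'a \<Rightarrow> int"
  assumes "subring S" and "quotient_field_of S"
    and "noetherian S" and "local_ring S" and "one_dimensional S"
    and "\<not> regular_1dim S"
    and "infinite (residue_field S)"
    and "discrete_valuation v"
    and "integral_closure S = val_ring v"
    and "\<exists>F. finite F \<and> val_ring v = S_span S F"
    and "\<forall>y\<in>val_ring v. \<exists>x\<in>S. y - x = 0 \<or> 1 \<le> v (y - x)"
    and "primary_to_max S I"
  shows "frobenius v I = cond_exp v I - 1
    \<and> is_max (cond_exp v I - 1) {v a | a. a \<notin> I \<and> a \<noteq> 0}
    \<and> is_max (cond_exp v I - 1) {v a | a. a \<in> colonK I (nonunits S) - I}"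
proof -
  note Sr = assms(1) and dv = assms(8)
  define B where "B = val_ring v"
  define C where "C = colonK I B"
  have idI: "ideal_of S I" using assms(12) unfolding primary_to_max_def by blast
  have IS: "I \<subseteq> S" and I0: "0 \<in> I" and Imul: "\<And>s y. s \<in> S \<Longrightarrow> y \<in> I \<Longrightarrow> s * y \<in> I"
    using idI unfolding ideal_of_def by auto
  have SB: "S \<subseteq> B"
  proof
    fix x assume x: "x \<in> S"
    have "integral_over S x" unfolding integral_over_def
      using subring_neg[OF Sr x] by (intro exI[of _ "1::nat"] exI[of _ "\<lambda>_. - x"]) auto
    then show "x \<in> B" using assms(9) unfolding B_def integral_closure_def by blast
  qed
  have Bmem: "\<And>x. x \<noteq> 0 \<Longrightarrow> x \<in> B \<longleftrightarrow> 0 \<le> v x" unfolding B_def val_ring_def by auto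
  have one_B: "1 \<in> B" unfolding B_def val_ring_def using dv_one[OF dv] by simp
  have CI: "C \<subseteq> I"
  proof
    fix a assume "a \<in> C" then have "a * 1 \<in> I" using one_B unfolding C_def colonK_def by blast
    then show "a \<in> I" by simp
  qed
  obtain F where F: "finite F" "B = S_span S F" using assms(10) B_def by blast
  obtain d where d: "d \<in> S" "d \<noteq> 0" "\<forall>f\<in>F. d * f \<in> S"
    using den_exists[OF Sr assms(2) F(1)] by blast
  have dB: "d * y \<in> S" if yB: "y \<in> B" for y
  proof -
    obtain r where r: "y = (\<Sum>f\<in>F. r f * f)" "\<forall>f\<in>F. r f \<in> S"
      using yB F(2) unfolding S_span_def by blast
    have "d * y = (\<Sum>f\<in>F. r f * (d * f))" unfolding r(1) sum_distrib_left
      by (simp add: ac_simps)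
    also have "\<dots> \<in> S" using r(2) d(3) F(1) Sr
      by (intro subring_sum) (auto simp: subring_def)
    finally show ?thesis .
  qed
  have "nonunits S \<noteq> {0}" using assms(5) unfolding one_dimensional_def by blast
  moreover have "0 \<in> nonunits S" using Sr unfolding nonunits_def subring_def by auto
  ultimately obtain x where x: "x \<in> nonunits S" "x \<noteq> 0" by blast
  obtain k where k: "x ^ k \<in> I" using assms(12) x(1) unfolding primary_to_max_def by blast
  define e where "e = x ^ k * d"
  have e0: "e \<noteq> 0" using x(2) d(2) unfolding e_def by simp
  have eC: "e \<in> C" unfolding C_def colonK_def
  proof (intro CollectI ballI)
    fix y assume "y \<in> B"
    then have "(d * y) * x ^ k \<in> I" using dB Imul k by blast
    then show "e * y \<in> I" unfolding e_def by (simp add: ac_simps)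
  qed
  have Cpos: "0 \<le> v a" if "a \<in> C" "a \<noteq> 0" for a
    using that CI IS SB Bmem by blast
  define P where "P n \<longleftrightarrow> (\<exists>a\<in>C. a \<noteq> 0 \<and> v a = int n)" for n :: nat
  have "P (nat (v e))" unfolding P_def using eC e0 Cpos[OF eC e0] by auto
  then have Pn0: "P (LEAST n. P n)" by (rule LeastI)
  define c where "c = int (LEAST n. P n)"
  obtain a0 where a0: "a0 \<in> C" "a0 \<noteq> 0" "v a0 = c" using Pn0 unfolding P_def c_def by blast
  have Ceq: "C = {y. y = 0 \<or> c \<le> v y}"
  proof (intro equalityI subsetI)
    fix a assume a: "a \<in> C"
    show "a \<in> {y. y = 0 \<or> c \<le> v y}"
    proof (cases "a = 0")
      case False
      then have "P (nat (v a))" unfolding P_def using a Cpos[OF a False] by auto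
      then have "(LEAST n. P n) \<le> nat (v a)" by (rule Least_le)
      then show ?thesis using Cpos[OF a False] unfolding c_def by auto
    qed simp
  next
    fix y assume y: "y \<in> {y. y = 0 \<or> c \<le> v y}"
    show "y \<in> C" unfolding C_def colonK_def
    proof (intro CollectI ballI)
      fix s assume s: "s \<in> B"
      show "y * s \<in> I"
      proof (cases "y = 0 \<or> s = 0")
        case True then show ?thesis using I0 by auto
      next
        case False
        then have yc: "c \<le> v y" using y by auto
        have "y / a0 * s \<in> B" using False a0 Bmem s
          by (simp add: divide_inverse dv_mult[OF dv] dv_inv[OF dv] yc)
        then have "a0 * (y / a0 * s) \<in> I" using a0(1) unfolding C_def colonK_def by blast
        then show ?thesis using a0(2) by simp
      qed
    qed
  qed
  have cexp: "cond_exp v I = c"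
    unfolding cond_exp_def
  proof (rule the_equality)
    show "colonK I (val_ring v) = {x. x = 0 \<or> c \<le> v x}" using Ceq C_def B_def by simp
  next
    fix c' assume h: "colonK I (val_ring v) = {x. x = 0 \<or> c' \<le> v x}"
    obtain z where z: "z \<noteq> 0" "v z = c" using dv_exists[OF dv] by blast
    obtain z' where z': "z' \<noteq> 0" "v z' = c'" using dv_exists[OF dv] by blast
    have "z \<in> {x. x = 0 \<or> c' \<le> v x}" "z' \<in> {x. x = 0 \<or> c \<le> v x}"
      using h Ceq z z' unfolding C_def B_def by auto
    then show "c' = c" using z z' by auto
  qed
  have upper: "v a \<le> c - 1" if "a \<notin> I" "a \<noteq> 0" for a
    using that Ceq CI by force
  obtain w where w: "w \<noteq> 0" "w \<notin> I" "v w = c - 1"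
  proof (rule ccontr)
    assume "\<not> thesis"
    then have allI': "\<And>a. a \<noteq> 0 \<Longrightarrow> v a = c - 1 \<Longrightarrow> a \<in> I" using that by blast
    obtain z where z: "z \<noteq> 0" "v z = c - 1" using dv_exists[OF dv] by blast
    have "z \<in> C" unfolding C_def colonK_def
    proof (intro CollectI ballI)
      fix s assume s: "s \<in> B"
      show "z * s \<in> I"
      proof (cases "s = 0")
        case True then show ?thesis using I0 by simp
      next
        case False
        then have vs: "0 \<le> v s" using s Bmem by blast
        show ?thesis
        proof (cases "v (z * s) = c - 1")
          case True then show ?thesis using allI' z False by simp
        next
          case f2: False
          then have "c \<le> v (z * s)" using vs z False by (simp add: dv_mult[OF dv])
          then have "z * s \<in> C" using Ceq by simp
          then show ?thesis using CI by blast
        qed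
      qed
    qed
    then show False using Ceq z by auto
  qed
  have wcol: "w \<in> colonK I (nonunits S)" unfolding colonK_def
  proof (intro CollectI ballI)
    fix y assume y: "y \<in> nonunits S"
    show "w * y \<in> I"
    proof (cases "y = 0")
      case True then show ?thesis using I0 by simp
    next
      case False
      have yS: "y \<in> S" and yn: "\<not> (inverse y \<in> S)" using y False unfolding nonunits_def by auto
      have vy0: "0 \<le> v y" using yS SB Bmem False by blast
      have "v y \<noteq> 0"
      proof
        assume "v y = 0"
        then have "inverse y \<in> B" using Bmem False dv_inv[OF dv False] by simp
        then have "integral_over S (inverse y)" using assms(9) unfolding B_def integral_closure_def by blast
        then obtain n cc where "\<forall>i<n. cc i \<in> S" "(inverse y) ^ n + (\<Sum>i<n. cc i * (inverse y) ^ i) = 0"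
          unfolding integral_over_def by blast
        then have "inverse y \<in> S" using integral_inverse[OF Sr yS False] by blast
        then show False using yn by blast
      qed
      then have "c \<le> v (w * y)" using vy0 w False by (simp add: dv_mult[OF dv])
      then have "w * y \<in> C" using Ceq by simp
      then show ?thesis using CI by blast
    qed
  qed
  have m1: "is_max (c - 1) {v a | a. a \<notin> I \<and> a \<noteq> 0}"
    unfolding is_max_def
  proof (intro conjI ballI)
    show "c - 1 \<in> {v a | a. a \<notin> I \<and> a \<noteq> 0}" using w by force
  next
    fix z assume "z \<in> {v a | a. a \<notin> I \<and> a \<noteq> 0}"
    then obtain a where "z = v a" "a \<notin> I" "a \<noteq> 0" by blast
    then show "z \<le> c - 1" using upper by simp
  qed
  have m2: "is_max (c - 1) {v a | a. a \<in> colonK I (nonunits S) - I}"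
    unfolding is_max_def
  proof (intro conjI ballI)
    show "c - 1 \<in> {v a | a. a \<in> colonK I (nonunits S) - I}" using w wcol by force
  next
    fix z assume "z \<in> {v a | a. a \<in> colonK I (nonunits S) - I}"
    then obtain a where "z = v a" "a \<notin> I" by blast
    moreover have "a \<noteq> 0" using I0 \<open>a \<notin> I\<close> by blast
    ultimately show "z \<le> c - 1" using upper by simp
  qed
  have "frobenius v I = c - 1" unfolding frobenius_def
    using m1 unfolding is_max_def by (intro Greatest_equality) auto
  then show ?thesis using m1 m2 cexp by simp
qed

end
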